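(* Let $m\ge3$, let $E^m$ and $O^m$ be the sets of even-parity and odd-parity $m$-bit strings, and let $A\subseteq E^m$. For $n\ge1$, let $m$ parties (the first being Alice) hold $X_j=(x^j_1,\dots,x^j_n)\in\{0,1\}^n$, $j=1,\dots,m$, under the promise that $x_i^1x_i^2\cdots x_i^m\in A\cup O^m$ for every $i$, and let $g_A(X_1,\dots,X_m)=\bigoplus_{i=1}^n t_A(x_i^1\cdots x_i^m)$, where $t_A(w)=1$ if $w\in A$ and $0$ otherwise. Then $g_A$ can be computed by a distributed protocol using only local classical operations, no a priori quantum entanglement, and $m-1$ classical bits of communication in total, at the end of which Alice knows the value of $g_A(X_1,\dots,X_m)$. *)

theory Defs
  imports Main
begin

(* m-bit strings are bool lists of length m; True = bit 1 *)
definition even_strings :: "nat \<Rightarrow> bool list set" where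
  "even_strings m = {w. length w = m \<and> even (length (filter id w))}"

definition odd_strings :: "nat \<Rightarrow> bool list set" where
  "odd_strings m = {w. length w = m \<and> odd (length (filter id w))}"

definition t_A :: "bool list set \<Rightarrow> bool list \<Rightarrow> bool" where
  "t_A A w = (w \<in> A)"

(* parties are 0..m-1, party 0 is Alice; X j = (x^j_1,...,x^j_n) *)
definition column :: "(nat \<Rightarrow> bool list) \<Rightarrow> nat \<Rightarrow> nat \<Rightarrow> bool list" where
  "column X m i = map (\<lambda>j. X j ! i) [0..<m]"

definition g_A :: "bool list set \<Rightarrow> nat \<Rightarrow> nat \<Rightarrow> (nat \<Rightarrow> bool list) \<Rightarrow> bool" where
  "g_A A m n X = foldr (\<lambda>i acc. t_A A (column X m i) \<noteq> acc) [0..<n] False"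

(* Deterministic classical point-to-point protocol: in round r, party sender r
   sends one bit to party receiver r; the bit is computed locally from the
   sender's own input and the sender's view (all bits it sent/received so far,
   tagged with their round numbers). *)
record protocol =
  rounds :: nat
  sender :: "nat \<Rightarrow> nat"
  receiver :: "nat \<Rightarrow> nat"
  msg :: "nat \<Rightarrow> bool list \<Rightarrow> (nat \<times> bool) list \<Rightarrow> bool"
  out :: "bool list \<Rightarrow> (nat \<times> bool) list \<Rightarrow> bool"

definition view :: "protocol \<Rightarrow> nat \<Rightarrow> nat \<Rightarrow> bool list \<Rightarrow> (nat \<times> bool) list" where
  "view P p r tr = map (\<lambda>k. (k, tr ! k))
      (filter (\<lambda>k. sender P k = p \<or> receiver P k = p) [0..<r])"

primrec transcript :: "protocol \<Rightarrow> (nat \<Rightarrow> bool list) \<Rightarrow> nat \<Rightarrow> bool list" where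
  "transcript P X 0 = []"
| "transcript P X (Suc r) = transcript P X r @
      [msg P r (X (sender P r)) (view P (sender P r) r (transcript P X r))]"

definition valid_protocol :: "nat \<Rightarrow> protocol \<Rightarrow> bool" where
  "valid_protocol m P \<longleftrightarrow> (\<forall>r < rounds P. sender P r < m \<and> receiver P r < m \<and> sender P r \<noteq> receiver P r)"

definition alice_output :: "protocol \<Rightarrow> (nat \<Rightarrow> bool list) \<Rightarrow> bool" where
  "alice_output P X = out P (X 0) (view P 0 (rounds P) (transcript P X (rounds P)))"

end

theory Submission
  imports Defs
begin

definition par :: "bool list \<Rightarrow> bool" where
  "par w = odd (length (filter id w))"

lemma foldr_xor: "foldr (\<lambda>i acc. b i \<noteq> acc) xs a = (a \<noteq> odd (\<Sum>i\<leftarrow>xs. (of_bool (b i) :: nat)))"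
  by (induction xs arbitrary: a) auto

lemma foldr_xor2: "foldr (\<lambda>p acc. snd p \<noteq> acc) ys a = (a \<noteq> odd (\<Sum>p\<leftarrow>ys. (of_bool (snd p) :: nat)))"
  by (induction ys arbitrary: a) auto

lemma par_sum: "par w = odd (\<Sum>i<length w. (of_bool (w ! i) :: nat))"
proof -
  have "length (filter id w) = card {i. i < length w \<and> w ! i}"
    by (simp add: length_filter_conv_card)
  also have "\<dots> = (\<Sum>i<length w. (of_bool (w ! i) :: nat))"
    by (simp add: sum.If_cases lessThan_def Collect_conj_eq Int_commute)
  finally show ?thesis unfolding par_def by simp
qed

lemma sum_odd_parity: fixes c :: "'a \<Rightarrow> nat" shows "odd (\<Sum>j\<in>J. (of_bool (odd (c j)) :: nat)) = odd (\<Sum>j\<in>J. c j)"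
proof -
  have "(\<Sum>j\<in>J. (of_bool (odd (c j)) :: nat)) = (\<Sum>j\<in>J. c j mod 2)"
    by (rule sum.cong) (auto simp: odd_iff_mod_2_eq_one)
  then have "(\<Sum>j\<in>J. (of_bool (odd (c j)) :: nat)) mod 2 = (\<Sum>j\<in>J. c j) mod 2"
    by (simp add: mod_sum_eq)
  then show ?thesis by (simp add: odd_iff_mod_2_eq_one)
qed

lemma sum_even_parity:
  fixes s :: "nat \<Rightarrow> nat" shows "odd (\<Sum>i<n. (of_bool (even (s i)) :: nat)) = (odd n \<noteq> odd (\<Sum>i<n. s i))"
proof -
  have "(\<Sum>i<n. (of_bool (even (s i)) :: nat)) + (\<Sum>i<n. (of_bool (odd (s i)) :: nat)) = n"
  proof -
    have "(\<Sum>i<n. (of_bool (even (s i)) :: nat)) + (\<Sum>i<n. (of_bool (odd (s i)) :: nat))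
        = (\<Sum>i<n. (of_bool (even (s i)) + of_bool (odd (s i)) :: nat))"
      by (rule sum.distrib[symmetric])
    also have "\<dots> = (\<Sum>i<n. (1::nat))" by (rule sum.cong) auto
    finally show ?thesis by simp
  qed
  then show ?thesis using sum_odd_parity[of s "{..<n}"]
    by (metis even_add)
qed

lemma sum_list_upt0: "(\<Sum>i\<leftarrow>[0..<n]. f i) = (\<Sum>i<n. f i)"
  by (simp add: sum_set_upt_conv_sum_list_nat[symmetric] atLeast0LessThan)

theorem theorem7:
  fixes m n :: nat and A :: "bool list set"
  assumes "m \<ge> 3" and "A \<subseteq> even_strings m" and "n \<ge> 1"
  shows "\<exists>P. valid_protocol m P \<and> rounds P = m - 1 \<and>
           (\<forall>X. (\<forall>j<m. length (X j) = n) \<and> (\<forall>i<n. column X m i \<in> A \<union> odd_strings m)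
                 \<longrightarrow> alice_output P X = g_A A m n X)"
proof -
  define P where "P = \<lparr>rounds = m - 1, sender = Suc, receiver = (\<lambda>_. 0),
     msg = (\<lambda>r x v. par x),
     out = (\<lambda>x v. (odd n \<noteq> (par x \<noteq> foldr (\<lambda>p acc. snd p \<noteq> acc) v False)))\<rparr>"
  have valid: "valid_protocol m P" unfolding valid_protocol_def P_def by auto
  have tr: "transcript P X r = map (\<lambda>k. par (X (Suc k))) [0..<r]" for X r
    by (induction r) (simp_all add: P_def)
  have main: "alice_output P X = g_A A m n X"
    if len: "\<forall>j<m. length (X j) = n" and prom: "\<forall>i<n. column X m i \<in> A \<union> odd_strings m" for X
  proof -
    define c where "c j = (\<Sum>i<n. (of_bool (X j ! i) :: nat))" for j
    define s where "s i = (\<Sum>j<m. (of_bool (X j ! i) :: nat))" for i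
    have parc: "par (X j) = odd (c j)" if "j < m" for j
      using par_sum[of "X j"] len that unfolding c_def by simp
    have vw: "view P 0 (m - 1) (transcript P X (m - 1)) = map (\<lambda>k. (k, par (X (Suc k)))) [0..<m - 1]"
      unfolding view_def tr by (simp add: P_def)
    have "alice_output P X = (odd n \<noteq> (par (X 0) \<noteq> odd (\<Sum>k<m - 1. (of_bool (par (X (Suc k))) :: nat))))"
    proof -
      have r: "rounds P = m - 1" and o: "out P = (\<lambda>x v. (odd n \<noteq> (par x \<noteq> foldr (\<lambda>p acc. snd p \<noteq> acc) v False)))"
        by (simp_all add: P_def)
      show ?thesis unfolding alice_output_def r vw o foldr_xor2 map_map o_def sum_list_upt0
        by simp
    qed
    also have "(\<Sum>k<m - 1. (of_bool (par (X (Suc k))) :: nat)) = (\<Sum>k<m - 1. (of_bool (odd (c (Suc k))) :: nat))"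
      by (rule sum.cong) (auto simp: parc)
    also have "odd \<dots> = odd (\<Sum>k<m - 1. c (Suc k))" by (rule sum_odd_parity)
    also have "(par (X 0) \<noteq> odd (\<Sum>k<m - 1. c (Suc k))) = odd (\<Sum>j<m. c j)"
    proof -
      have m: "m = Suc (m - 1)" using assms(1) by simp
      have "(\<Sum>j<m. c j) = c 0 + (\<Sum>k<m - 1. c (Suc k))"
        by (subst m, subst sum.lessThan_Suc_shift) simp
      then show ?thesis using parc[of 0] assms(1) by simp
    qed
    finally have L: "alice_output P X = (odd n \<noteq> odd (\<Sum>j<m. c j))" .
    have tA: "t_A A (column X m i) = even (s i)" if "i < n" for i
    proof -
      have pc: "par (column X m i) = odd (s i)"
        using par_sum[of "column X m i"] unfolding s_def column_def by simp
      have ev: "w \<in> A \<Longrightarrow> \<not> par w" for w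
        using assms(2) unfolding even_strings_def par_def by auto
      have od: "w \<in> odd_strings m \<Longrightarrow> par w" for w
        unfolding odd_strings_def par_def by auto
      show ?thesis using prom that ev od pc unfolding t_A_def by blast
    qed
    have "g_A A m n X = odd (\<Sum>i<n. (of_bool (even (s i)) :: nat))"
    proof -
      have eq: "(\<Sum>i<n. (of_bool (t_A A (column X m i)) :: nat)) = (\<Sum>i<n. (of_bool (even (s i)) :: nat))"
        by (rule sum.cong) (auto simp: tA)
      have "g_A A m n X = odd (\<Sum>i<n. (of_bool (t_A A (column X m i)) :: nat))"
        unfolding g_A_def foldr_xor sum_list_upt0 by simp
      then show ?thesis by (simp only: eq)
    qed
    also have "\<dots> = (odd n \<noteq> odd (\<Sum>i<n. s i))" by (rule sum_even_parity)
    also have "(\<Sum>i<n. s i) = (\<Sum>j<m. c j)"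
      unfolding s_def c_def by (rule sum.swap)
    finally show ?thesis using L by simp
  qed
  show ?thesis
    by (rule exI[of _ P]) (use valid main in \<open>simp add: P_def\<close>)
qed

end
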